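(* Let $U=\{u_1,\dots,u_{3n}\}$ with $n\ge1$ and let $\mathcal{S}=\{S_1,\dots,S_p\}$, $p\ge 1$, be a family of $3$-element subsets of $U$. Fix an integer $m\ge 6n+3p$. Build the labeled complete bipartite graph $G$ with partite sets $V_1=\{x_1,\dots,x_{3n}\}\cup\{x(S_1),\dots,x(S_p)\}$ and $V_2=\{y_1,\dots,y_{3n}\}\cup\{y_k(S_i):1\le i\le p,\,1\le k\le m\}\cup\{z_1,\dots,z_{3n}\}$, with labels: $x_iy_j$ is $+$ iff $i=j$ or $u_i,u_j$ lie in a common member of $\mathcal{S}$; $x(S_i)y_k(S_\ell)$ is $+$ iff $i=\ell$; $x_iy_k(S_j)$ and $x(S_j)y_i$ are $+$ iff $u_i\in S_j$; $x_iz_j$ is $+$ for all $i,j$; $x(S_i)z_j$ is $-$ for all $i,j$. Assign tolerances $t_{x(S_i)}=3$ and $t_{x_i}=m(d(u_i)-1)+(c(u_i)-2)+(3n-3)$, where $d(u_i)$ is the number of members of $\mathcal{S}$ containing $u_i$ and $c(u_i)$ is the number of $u_j\in U\setminus\{u_i\}$ lying in a common member of $\mathcal{S}$ with $u_i$. Suppose $G$ has a clustering in which each $v\in V_1$ has at most $t_v$ incident errors. Then for every $u_j\in U$ there is a unique $S_i\in\mathcal{S}$ such that $x_j$ is in the same cluster as $x(S_i)$, and this $S_i$ satisfies: (1) $u_j\in S_i$, and (2) $x_j$ is in the same cluster as every vertex $y_\ell$ with $u_\ell\in S_i$.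
   Context: A clustering is a partition of $V(G)$. An error at a vertex $v$ is an incident edge that is a $+$ edge between different clusters or a $-$ edge within a cluster. *)

theory Defs
  imports Main "HOL-Library.Disjoint_Sets"
begin

text \<open>Vertices of the gadget graph G.
  X i = x_i, XS i = x(S_i), Y i = y_i, YS i k = y_k(S_i), Z i = z_i.\<close>
datatype vtx = X nat | XS nat | Y nat | YS nat nat | Z nat

definition V1 :: "nat \<Rightarrow> nat \<Rightarrow> vtx set" where
  "V1 n p = X ` {1..3*n} \<union> XS ` {1..p}"

definition V2 :: "nat \<Rightarrow> nat \<Rightarrow> nat \<Rightarrow> vtx set" where
  "V2 n p m = Y ` {1..3*n} \<union> {YS i k | i k. i \<in> {1..p} \<and> k \<in> {1..m}} \<union> Z ` {1..3*n}"

definition common :: "(nat \<Rightarrow> nat set) \<Rightarrow> nat \<Rightarrow> nat \<Rightarrow> nat \<Rightarrow> bool" where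
  "common S p i j = (\<exists>l\<in>{1..p}. i \<in> S l \<and> j \<in> S l)"

text \<open>Label of the edge v w (v in V1, w in V2): True means +, False means -.\<close>
fun plus_edge :: "(nat \<Rightarrow> nat set) \<Rightarrow> nat \<Rightarrow> vtx \<Rightarrow> vtx \<Rightarrow> bool" where
  "plus_edge S p (X i) (Y j) = (i = j \<or> common S p i j)"
| "plus_edge S p (XS i) (YS l k) = (i = l)"
| "plus_edge S p (X i) (YS j k) = (i \<in> S j)"
| "plus_edge S p (XS j) (Y i) = (i \<in> S j)"
| "plus_edge S p (X i) (Z j) = True"
| "plus_edge S p (XS i) (Z j) = False"
| "plus_edge S p _ _ = False"

definition same_cluster :: "vtx set set \<Rightarrow> vtx \<Rightarrow> vtx \<Rightarrow> bool" where
  "same_cluster P u v = (\<exists>C\<in>P. u \<in> C \<and> v \<in> C)"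

text \<open>Number of errors at a vertex v of V1 (all its incident edges go to V2).\<close>
definition errors :: "(nat \<Rightarrow> nat set) \<Rightarrow> nat \<Rightarrow> nat \<Rightarrow> nat \<Rightarrow> vtx set set \<Rightarrow> vtx \<Rightarrow> nat" where
  "errors S n p m P v = card {w \<in> V2 n p m.
      (plus_edge S p v w \<and> \<not> same_cluster P v w) \<or> (\<not> plus_edge S p v w \<and> same_cluster P v w)}"

definition dgr :: "(nat \<Rightarrow> nat set) \<Rightarrow> nat \<Rightarrow> nat \<Rightarrow> nat" where
  "dgr S p i = card {l \<in> {1..p}. i \<in> S l}"

definition cnb :: "(nat \<Rightarrow> nat set) \<Rightarrow> nat \<Rightarrow> nat \<Rightarrow> nat \<Rightarrow> nat" where
  "cnb S n p i = card {j \<in> {1..3*n}. j \<noteq> i \<and> common S p i j}"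

definition tol :: "(nat \<Rightarrow> nat set) \<Rightarrow> nat \<Rightarrow> nat \<Rightarrow> nat \<Rightarrow> vtx \<Rightarrow> int" where
  "tol S n p m v = (case v of
       XS i \<Rightarrow> 3
     | X i \<Rightarrow> int m * (int (dgr S p i) - 1) + (int (cnb S n p i) - 2) + (3 * int n - 3)
     | _ \<Rightarrow> 0)"

end

theory Submission
  imports Defs
begin

lemma card_split_filter:
  assumes "finite F"
  shows "card {x\<in>F. Q x} + card {x\<in>F. \<not> Q x} = card F"
proof -
  have "F = {x\<in>F. Q x} \<union> {x\<in>F. \<not> Q x}" by auto
  moreover have "card ({x\<in>F. Q x} \<union> {x\<in>F. \<not> Q x}) = card {x\<in>F. Q x} + card {x\<in>F. \<not> Q x}"
    by (rule card_Un_disjoint) (use assms in auto)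
  ultimately show ?thesis by simp
qed

lemma finite_V2: "finite (V2 n p m)"
proof -
  have "{YS i k | i k. i \<in> {1..p} \<and> k \<in> {1..m}} = (\<lambda>(i,k). YS i k) ` ({1..p} \<times> {1..m})"
    by auto
  then show ?thesis unfolding V2_def by simp
qed

lemma card_YS: "card (YS l ` K) = card K"
  by (rule card_image) (auto simp: inj_on_def)
lemma card_Y: "card (Y ` K) = card K"
  by (rule card_image) (auto simp: inj_on_def)
lemma card_Z: "card (Z ` K) = card K"
  by (rule card_image) (auto simp: inj_on_def)

lemma errors_ge:
  assumes "Q \<subseteq> {w \<in> V2 n p m.
      (plus_edge S p v w \<and> \<not> same_cluster P v w) \<or> (\<not> plus_edge S p v w \<and> same_cluster P v w)}"
  shows "card Q \<le> errors S n p m P v"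
  unfolding errors_def
  by (rule card_mono) (use assms finite_V2 in auto)

theorem lemma4:
  fixes n p m :: nat and S :: "nat \<Rightarrow> nat set" and P :: "vtx set set"
  assumes "n \<ge> 1" and "p \<ge> 1"
    and "\<forall>i\<in>{1..p}. S i \<subseteq> {1..3*n} \<and> card (S i) = 3"
    and "inj_on S {1..p}"
    and "m \<ge> 6*n + 3*p"
    and "partition_on (V1 n p \<union> V2 n p m) P"
    and "\<forall>v\<in>V1 n p. int (errors S n p m P v) \<le> tol S n p m v"
  shows "\<forall>j\<in>{1..3*n}. \<exists>i\<in>{1..p}. same_cluster P (X j) (XS i)
            \<and> (\<forall>i'\<in>{1..p}. same_cluster P (X j) (XS i') \<longrightarrow> i' = i)
            \<and> j \<in> S i
            \<and> (\<forall>l\<in>{1..3*n}. l \<in> S i \<longrightarrow> same_cluster P (X j) (Y l))"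
proof
  fix j assume j: "j \<in> {1..3*n}"
  define A where "A = V1 n p \<union> V2 n p m"
  have UP: "\<Union>P = A" using assms(6) unfolding A_def partition_on_def by auto
  have dis: "disjoint P" using assms(6) unfolding partition_on_def by auto
  have "\<forall>v\<in>A. \<exists>C. C \<in> P \<and> v \<in> C" using UP by blast
  then obtain cl where cl: "\<And>v. v \<in> A \<Longrightarrow> cl v \<in> P \<and> v \<in> cl v" by metis
  have uniq: "\<And>C C' v. C \<in> P \<Longrightarrow> C' \<in> P \<Longrightarrow> v \<in> C \<Longrightarrow> v \<in> C' \<Longrightarrow> C = C'"
    using dis by (meson disjointD disjoint_iff)
  have sc: "\<And>v w. v \<in> A \<Longrightarrow> same_cluster P v w \<longleftrightarrow> w \<in> cl v"
    unfolding same_cluster_def using cl uniq by metis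
  have XA: "X j \<in> A" using j unfolding A_def V1_def by auto
  have XSA: "\<And>l. l \<in> {1..p} \<Longrightarrow> XS l \<in> A" unfolding A_def V1_def by auto
  have XSV1: "\<And>l. l \<in> {1..p} \<Longrightarrow> XS l \<in> V1 n p" unfolding V1_def by auto
  have XV1: "X j \<in> V1 n p" using j unfolding V1_def by auto
  have YSV2: "\<And>l k. l \<in> {1..p} \<Longrightarrow> k \<in> {1..m} \<Longrightarrow> YS l k \<in> V2 n p m" unfolding V2_def by auto
  have YV2: "\<And>l. l \<in> {1..3*n} \<Longrightarrow> Y l \<in> V2 n p m" unfolding V2_def by auto
  have ZV2: "\<And>l. l \<in> {1..3*n} \<Longrightarrow> Z l \<in> V2 n p m" unfolding V2_def by auto
  have errXS: "\<And>l. l \<in> {1..p} \<Longrightarrow> errors S n p m P (XS l) \<le> 3"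
    using assms(7) XSV1 unfolding tol_def by fastforce
  define d where "d = dgr S p j"
  define c where "c = cnb S n p j"
  have errX: "int (errors S n p m P (X j)) \<le> int m * (int d - 1) + (int c - 2) + (3 * int n - 3)"
    using assms(7) XV1 unfolding tol_def d_def c_def by fastforce
  define C where "C = cl (X j)"
  define D where "D = {l \<in> {1..p}. j \<in> S l}"
  have dD: "d = card D" unfolding d_def D_def dgr_def by simp
  have finD: "finite D" unfolding D_def by simp
  have dp: "d \<le> p"
  proof -
    have "card D \<le> card {1..p}" unfolding D_def by (rule card_mono) auto
    then show ?thesis using dD by simp
  qed
  have c3n: "c + 1 \<le> 3 * n"
  proof -
    have "c \<le> card ({1..3*n} - {j})" unfolding c_def cnb_def by (rule card_mono) auto
    then show ?thesis using j by auto
  qed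
  have m9: "m \<ge> 9" using assms(1,2,5) by linarith
  have sCX: "\<And>w. same_cluster P (X j) w \<longleftrightarrow> w \<in> C" using sc XA C_def by blast
  have G: "\<And>l. l \<in> {1..p} \<Longrightarrow> card {k\<in>{1..m}. YS l k \<notin> cl (XS l)} \<le> 3"
  proof -
    fix l assume l: "l \<in> {1..p}"
    have "card (YS l ` {k\<in>{1..m}. YS l k \<notin> cl (XS l)}) \<le> errors S n p m P (XS l)"
      by (rule errors_ge) (use l YSV2 sc[OF XSA[OF l]] in auto)
    then show "card {k\<in>{1..m}. YS l k \<notin> cl (XS l)} \<le> 3" using errXS[OF l] card_YS by simp
  qed
  have G2: "\<And>l. l \<in> {1..p} \<Longrightarrow> card {k\<in>{1..m}. YS l k \<in> cl (XS l)} + 3 \<ge> m"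
    proof -
    fix l assume l: "l \<in> {1..p}"
    have "card {k\<in>{1..m}. YS l k \<in> cl (XS l)} + card {k\<in>{1..m}. YS l k \<notin> cl (XS l)} = m"
      using card_split_filter[of "{1..m}" "\<lambda>k. YS l k \<in> cl (XS l)"] by simp
    then show "card {k\<in>{1..m}. YS l k \<in> cl (XS l)} + 3 \<ge> m" using G[OF l] by linarith
  qed
  have CP: "C \<in> P" using cl[OF XA] C_def by simp
  have notC: "\<And>l. l \<in> {1..p} \<Longrightarrow> XS l \<notin> C \<Longrightarrow> card {k\<in>{1..m}. YS l k \<in> C} \<le> 3"
  proof -
    fix l assume l: "l \<in> {1..p}" and nl: "XS l \<notin> C"
    have "{k\<in>{1..m}. YS l k \<in> C} \<subseteq> {k\<in>{1..m}. YS l k \<notin> cl (XS l)}"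
    proof
      fix k assume k0: "k \<in> {k\<in>{1..m}. YS l k \<in> C}"
      then have k: "k \<in> {1..m}" "YS l k \<in> C" by auto
      show "k \<in> {k\<in>{1..m}. YS l k \<notin> cl (XS l)}"
      proof (rule ccontr)
        assume "k \<notin> {k\<in>{1..m}. YS l k \<notin> cl (XS l)}"
        then have k3: "YS l k \<in> cl (XS l)" using k by simp
        have "C = cl (XS l)" by (rule uniq[OF CP _ k(2) k3]) (use cl[OF XSA[OF l]] in simp)
        then show False using nl cl[OF XSA[OF l]] by simp
      qed
    qed
    then have "card {k\<in>{1..m}. YS l k \<in> C} \<le> card {k\<in>{1..m}. YS l k \<notin> cl (XS l)}"
      by (rule card_mono[rotated]) simp
    then show "card {k\<in>{1..m}. YS l k \<in> C} \<le> 3" using G[OF l] by linarith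
  qed
  have cnt: "\<And>l. card {k\<in>{1..m}. YS l k \<in> C} + card {k\<in>{1..m}. YS l k \<notin> C} = m"
    using card_split_filter[of "{1..m}"] by simp
  have stepA: "\<exists>i\<in>D. XS i \<in> C"
  proof (rule ccontr)
    assume na: "\<not> (\<exists>i\<in>D. XS i \<in> C)"
    define Q where "Q = (\<Union>l\<in>D. YS l ` {k\<in>{1..m}. YS l k \<notin> C})"
    have "card Q \<le> errors S n p m P (X j)"
      unfolding Q_def by (rule errors_ge) (auto simp: D_def sCX intro: YSV2)
    moreover have "card Q = (\<Sum>l\<in>D. card (YS l ` {k\<in>{1..m}. YS l k \<notin> C}))"
      unfolding Q_def by (rule card_UN_disjoint) (use finD in auto)
    moreover have "(\<Sum>l\<in>D. card (YS l ` {k\<in>{1..m}. YS l k \<notin> C})) \<ge> (\<Sum>l\<in>D. m - 3)"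
    proof (rule sum_mono)
      fix l assume l: "l \<in> D"
      have "card {k\<in>{1..m}. YS l k \<in> C} \<le> 3" using notC l na unfolding D_def by blast
      then show "m - 3 \<le> card (YS l ` {k\<in>{1..m}. YS l k \<notin> C})" using cnt[of l] card_YS by simp
    qed
    ultimately have "d * (m - 3) \<le> errors S n p m P (X j)" using dD by simp
    then have "int d * (int m - 3) \<le> int m * (int d - 1) + (int c - 2) + (3 * int n - 3)"
    proof -
      have "int (d * (m - 3)) = int d * (int m - 3)" using m9 by (simp add: of_nat_diff)
      then show ?thesis using errX \<open>d * (m - 3) \<le> errors S n p m P (X j)\<close> by linarith
    qed
    then have "int m \<le> 3 * int d + int c + 3 * int n - 5" by (simp add: algebra_simps)
    then show False using dp c3n assms(5) by linarith
  qed
  have stepB: "\<And>i i'. i \<in> {1..p} \<Longrightarrow> i' \<in> {1..p} \<Longrightarrow> XS i \<in> C \<Longrightarrow> XS i' \<in> C \<Longrightarrow> i' = i"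
  proof (rule ccontr)
    fix i i' assume i: "i \<in> {1..p}" and i': "i' \<in> {1..p}" and in1: "XS i \<in> C" and in2: "XS i' \<in> C" and ne: "i' \<noteq> i"
    have e1: "cl (XS i) = C" by (rule uniq[OF _ CP, of _ "XS i"]) (use cl[OF XSA[OF i]] in1 in auto)
    have e2: "cl (XS i') = C" by (rule uniq[OF _ CP, of _ "XS i'"]) (use cl[OF XSA[OF i']] in2 in auto)
    have "card (YS i' ` {k\<in>{1..m}. YS i' k \<in> C}) \<le> errors S n p m P (XS i)"
      by (rule errors_ge) (use i' ne YSV2 sc[OF XSA[OF i]] e1 in auto)
    then have "card {k\<in>{1..m}. YS i' k \<in> C} \<le> 3" using errXS[OF i] card_YS by (metis order.trans)
    then show False using G2[OF i'] e2 m9 by simp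
  qed
  from stepA obtain i where iD: "i \<in> D" and iC: "XS i \<in> C" by blast
  have i: "i \<in> {1..p}" and ji: "j \<in> S i" using iD unfolding D_def by auto
  have eC: "cl (XS i) = C" by (rule uniq[OF _ CP, of _ "XS i"]) (use cl[OF XSA[OF i]] iC in auto)
  have Si: "S i \<subseteq> {1..3*n}" "card (S i) = 3" using assms(3) i by auto
  have stepC: "\<forall>l\<in>{1..3*n}. l \<in> S i \<longrightarrow> Y l \<in> C"
  proof -
    define D' where "D' = D - {i}"
    have finD': "finite D'" using finD D'_def by simp
    have D'sub: "\<And>l. l \<in> D' \<Longrightarrow> l \<in> {1..p} \<and> j \<in> S l \<and> l \<noteq> i" unfolding D'_def D_def by auto
    have cD': "card D' = d - 1" unfolding D'_def dD using iD finD by simp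
    have d1: "d \<ge> 1" using iD finD dD by (metis card_0_eq empty_iff less_one not_less)
    define Ka where "Ka = {k\<in>{1..m}. YS i k \<notin> C}"
    define Kb where "Kb = {l\<in>S i. Y l \<notin> C}"
    define Kb' where "Kb' = {l\<in>S i. Y l \<in> C}"
    define Kz where "Kz = {l\<in>{1..3*n}. Z l \<in> C}"
    define Kz' where "Kz' = {l\<in>{1..3*n}. Z l \<notin> C}"
    define Kq where "Kq = {l\<in>{1..3*n}. l \<notin> S i \<and> Y l \<in> C}"
    define N where "N = {l\<in>{1..3*n}. l = j \<or> common S p j l}"
    define KN where "KN = {l\<in>N. Y l \<notin> C}"
    define KN' where "KN' = {l\<in>N. Y l \<in> C}"
    define R where "R = (\<Sum>l\<in>D'. card {k\<in>{1..m}. YS l k \<in> C})"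
    define s where "s = (\<Sum>l\<in>D'. card {k\<in>{1..m}. YS l k \<notin> C})"
    define U5 where "U5 = (\<Union>l\<in>D'. YS l ` {k\<in>{1..m}. YS l k \<in> C})"
    define U6 where "U6 = (\<Union>l\<in>D'. YS l ` {k\<in>{1..m}. YS l k \<notin> C})"
    have finSi: "finite (S i)" using Si by (metis card.infinite zero_neq_numeral)
    have fins: "finite Ka" "finite Kb" "finite Kz" "finite Kq" "finite KN" "finite Kz'" "finite U5" "finite U6"
      unfolding Ka_def Kb_def Kz_def Kq_def KN_def N_def Kz'_def U5_def U6_def using finSi finD' by auto
    have cU5: "card U5 = R" unfolding U5_def R_def
      by (subst card_UN_disjoint) (use finD' D'sub card_YS in auto)
    have cU6: "card U6 = s" unfolding U6_def s_def
      by (subst card_UN_disjoint) (use finD' D'sub card_YS in auto)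
    have sR: "s + R = (d - 1) * m"
    proof -
      have "s + R = (\<Sum>l\<in>D'. m)" unfolding s_def R_def
        by (subst sum.distrib[symmetric]) (use cnt in \<open>simp add: add.commute\<close>)
      then show ?thesis using cD' by simp
    qed
    have bb: "card Kb + card Kb' = 3" unfolding Kb_def Kb'_def
      using card_split_filter[OF finSi, of "\<lambda>l. Y l \<notin> C"] Si by simp
    have zz: "card Kz + card Kz' = 3 * n" unfolding Kz_def Kz'_def
      using card_split_filter[of "{1..3*n}" "\<lambda>l. Z l \<in> C"] by simp
    have Neq: "N = insert j {l\<in>{1..3*n}. l \<noteq> j \<and> common S p j l}" unfolding N_def using j by auto
    have cN: "card N = c + 1" unfolding Neq c_def cnb_def by simp
    have NN: "card KN + card KN' = card N" unfolding KN_def KN'_def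
      using card_split_filter[of N "\<lambda>l. Y l \<notin> C"] by (simp add: N_def)
    have KN'le: "card KN' \<le> card Kb' + card Kq"
    proof -
      have "KN' \<subseteq> Kb' \<union> Kq" unfolding KN'_def Kb'_def Kq_def N_def by auto
      then have "card KN' \<le> card (Kb' \<union> Kq)" by (rule card_mono[rotated]) (use fins finSi in \<open>auto simp: Kb'_def\<close>)
      also have "\<dots> \<le> card Kb' + card Kq" by (rule card_Un_le)
      finally show ?thesis .
    qed
    have sXS: "\<And>w. same_cluster P (XS i) w \<longleftrightarrow> w \<in> C" using sc[OF XSA[OF i]] eC by simp
    define Q1 where "Q1 = YS i ` Ka \<union> Y ` Kb \<union> Z ` Kz \<union> Y ` Kq \<union> U5"
    have "card Q1 \<le> errors S n p m P (XS i)"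
      unfolding Q1_def
    proof (rule errors_ge)
      show "YS i ` Ka \<union> Y ` Kb \<union> Z ` Kz \<union> Y ` Kq \<union> U5 \<subseteq> {w \<in> V2 n p m.
        plus_edge S p (XS i) w \<and> \<not> same_cluster P (XS i) w \<or> \<not> plus_edge S p (XS i) w \<and> same_cluster P (XS i) w}"
        unfolding sXS Ka_def Kb_def Kz_def Kq_def U5_def using Si(1) i
        by (auto intro!: YSV2 YV2 ZV2 dest: D'sub)
    qed
    moreover have "card Q1 = card Ka + card Kb + card Kz + card Kq + R"
    proof -
      have "card Q1 = card (YS i ` Ka \<union> Y ` Kb \<union> Z ` Kz \<union> Y ` Kq) + card U5"
        unfolding Q1_def by (rule card_Un_disjoint) (use fins D'sub in \<open>auto simp: U5_def\<close>)
      moreover have "card (YS i ` Ka \<union> Y ` Kb \<union> Z ` Kz \<union> Y ` Kq) = card (YS i ` Ka \<union> Y ` Kb \<union> Z ` Kz) + card (Y ` Kq)"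
        by (rule card_Un_disjoint) (use fins in \<open>auto simp: Kb_def Kq_def\<close>)
      moreover have "card (YS i ` Ka \<union> Y ` Kb \<union> Z ` Kz) = card (YS i ` Ka \<union> Y ` Kb) + card (Z ` Kz)"
        by (rule card_Un_disjoint) (use fins in auto)
      moreover have "card (YS i ` Ka \<union> Y ` Kb) = card (YS i ` Ka) + card (Y ` Kb)"
        by (rule card_Un_disjoint) (use fins in auto)
      ultimately show ?thesis using cU5 card_YS card_Y card_Z by simp
    qed
    ultimately have e1: "card Ka + card Kb + card Kz + card Kq + R \<le> 3" using errXS[OF i] by simp
    define Q2 where "Q2 = U6 \<union> YS i ` Ka \<union> Z ` Kz' \<union> Y ` KN"
    have "card Q2 \<le> errors S n p m P (X j)"
      unfolding Q2_def
    proof (rule errors_ge)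
      show "U6 \<union> YS i ` Ka \<union> Z ` Kz' \<union> Y ` KN \<subseteq> {w \<in> V2 n p m.
        plus_edge S p (X j) w \<and> \<not> same_cluster P (X j) w \<or> \<not> plus_edge S p (X j) w \<and> same_cluster P (X j) w}"
        unfolding sCX Ka_def Kz'_def KN_def N_def U6_def using i ji
        by (auto intro!: YSV2 YV2 ZV2 dest: D'sub)
    qed
    moreover have "card Q2 = s + card Ka + card Kz' + card KN"
    proof -
      have "card Q2 = card (U6 \<union> YS i ` Ka \<union> Z ` Kz') + card (Y ` KN)"
        unfolding Q2_def by (rule card_Un_disjoint) (use fins in \<open>auto simp: U6_def\<close>)
      moreover have "card (U6 \<union> YS i ` Ka \<union> Z ` Kz') = card (U6 \<union> YS i ` Ka) + card (Z ` Kz')"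
        by (rule card_Un_disjoint) (use fins in \<open>auto simp: U6_def\<close>)
      moreover have "card (U6 \<union> YS i ` Ka) = card U6 + card (YS i ` Ka)"
        by (rule card_Un_disjoint) (use fins D'sub in \<open>auto simp: U6_def\<close>)
      ultimately show ?thesis using cU6 card_YS card_Y card_Z by simp
    qed
    ultimately have e2: "int (s + card Ka + card Kz' + card KN) \<le> int m * (int d - 1) + (int c - 2) + (3 * int n - 3)"
      using errX by linarith
    have dm: "int ((d - 1) * m) = int m * (int d - 1)" using d1 by (simp add: of_nat_diff algebra_simps)
    have "card Kb = 0" using e1 e2 dm sR bb zz cN NN KN'le by linarith
    then have "Kb = {}" using fins by simp
    then show ?thesis unfolding Kb_def by blast
  qed
  show "\<exists>i\<in>{1..p}. same_cluster P (X j) (XS i)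
            \<and> (\<forall>i'\<in>{1..p}. same_cluster P (X j) (XS i') \<longrightarrow> i' = i)
            \<and> j \<in> S i
            \<and> (\<forall>l\<in>{1..3*n}. l \<in> S i \<longrightarrow> same_cluster P (X j) (Y l))"
    using i iC stepB ji stepC unfolding sCX by blast
qed

end
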